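(* Let $\Phi=P.\phi$ be a DQBF with prefix $P=\forall x_1,\dots,x_n\,\exists y_1(D_1),\dots,y_k(D_k)$. If $G_{\mathrm{syn}}$ is a syntactic symmetry group for $\Phi$, then the associated group $G_{\mathrm{sem}}$ of $G_{\mathrm{syn}}$ is a semantic symmetry group for $\Phi$ (in particular, it is a group under composition).
   Context: $X=\{x_1,\dots,x_n\}$, $Y=\{y_1,\dots,y_k\}$ are finite disjoint sets of propositional variables; $\operatorname{BF}(V)$ the propositional formulas over $V\subseteq X\cup Y$; $\mathcal A(V)$ the assignments $V\to\{\top,\bot\}$; $[\phi]_\sigma$ the truth value; $\phi\in\operatorname{BF}(X\cup Y)$; $D_j\subseteq X$. An interpretation is $s=(s_1,\dots,s_k)$ with $s_j:\{\top,\bot\}^{|D_j|}\to\{\top,\bot\}$; $\mathcal S(P)$ the set of interpretations. For $\sigma\in\mathcal A(X)$, $\sigma_s\in\mathcal A(X\cup Y)$ equals $\sigma$ on $X$ and $\sigma_s(y_j)=s_j$ evaluated at $\sigma$'s values on $D_j$. $[P.\phi]_s=\bigwedge_{\sigma\in\mathcal A(X)}[\phi]_{\sigma_s}$. For $g:\operatorname{BF}(V)\to\operatorname{BF}(V)$ and $\rho\in\mathcal A(V)$, $g(\rho)(v)=[g(v)]_\rho$; $g$ preserves propositional satisfiability if $[g(\phi)]_\rho=[\phi]_{g(\rho)}$ always. A formula in $\operatorname{BF}(Y)$ depends on $x_i$ if it contains some $y_j$ with $x_i\in D_j$. A bijection $g$ of $\operatorname{BF}(X\cup Y)$ is admissible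 w.r.t. $P$ if it preserves propositional satisfiability, $g(x_i)\in\operatorname{BF}(X)$, $g(y_j)\in\operatorname{BF}(Y)$, and if $g(y_j)$ depends on $x_i$ then $g^{-1}(x_i)\in\operatorname{BF}(D_j)$. An admissible group is a subgroup of all admissible functions. For admissible $g$ and $\sigma\in\mathcal A(X)$, $g(\sigma)(x)=[g(x)]_\sigma$. A syntactic symmetry group for $P.\phi$ is an admissible group $G$ with $[P.\phi]_s=[P.g(\phi)]_s$ for all $g\in G$, $s\in\mathcal S(P)$. The associated group of $G_{\mathrm{syn}}$ is the set of all bijections $f:\mathcal S(P)\to\mathcal S(P)$ such that for every $s\in\mathcal S(P)$ and $\sigma\in\mathcal A(X)$ there exists $g\in G_{\mathrm{syn}}$ with $g(\sigma)_{f(s)}=g(\sigma_s)$. A semantic symmetry group for $P.\phi$ is a group $G$ of bijections of $\mathcal S(P)$ with $[P.\phi]_s=[P.\phi]_{f(s)}$ for all $f\in G$, $s\in\mathcal S(P)$. *)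

theory Defs
  imports Main "HOL-Algebra.Bij"
begin

datatype 'v form = FTrue | FFalse | Var 'v | Neg "'v form"
  | Conj "'v form" "'v form" | Disj "'v form" "'v form"

primrec fvars :: "'v form \<Rightarrow> 'v set" where
  "fvars FTrue = {}" | "fvars FFalse = {}" | "fvars (Var v) = {v}"
| "fvars (Neg a) = fvars a" | "fvars (Conj a b) = fvars a \<union> fvars b"
| "fvars (Disj a b) = fvars a \<union> fvars b"

primrec feval :: "'v form \<Rightarrow> ('v \<Rightarrow> bool) \<Rightarrow> bool" where
  "feval FTrue \<rho> = True" | "feval FFalse \<rho> = False" | "feval (Var v) \<rho> = \<rho> v"
| "feval (Neg a) \<rho> = (\<not> feval a \<rho>)"
| "feval (Conj a b) \<rho> = (feval a \<rho> \<and> feval b \<rho>)"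
| "feval (Disj a b) \<rho> = (feval a \<rho> \<or> feval b \<rho>)"

definition BF :: "'v set \<Rightarrow> 'v form set" where
  "BF V = {\<phi>. fvars \<phi> \<subseteq> V}"

(* A(V): assignments V -> bool, represented canonically as total functions
   that are False outside V *)
definition Asg :: "'v set \<Rightarrow> ('v \<Rightarrow> bool) set" where
  "Asg V = {\<sigma>. \<forall>v. v \<notin> V \<longrightarrow> \<sigma> v = False}"

(* Interpretations S(P): s y is a Skolem function for y \<in> Y depending only
   on the values of the variables in D y; canonical value outside Y *)
definition Interp :: "'v set \<Rightarrow> ('v \<Rightarrow> 'v set) \<Rightarrow> ('v \<Rightarrow> ('v \<Rightarrow> bool) \<Rightarrow> bool) set" where
  "Interp Y D = {s. (\<forall>y\<in>Y. \<forall>\<sigma> \<sigma>'. (\<forall>x\<in>D y. \<sigma> x = \<sigma>' x) \<longrightarrow> s y \<sigma> = s y \<sigma>')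
                 \<and> (\<forall>v. v \<notin> Y \<longrightarrow> s v = (\<lambda>_. False))}"

definition ext_asg :: "'v set \<Rightarrow> ('v \<Rightarrow> ('v \<Rightarrow> bool) \<Rightarrow> bool) \<Rightarrow> ('v \<Rightarrow> bool) \<Rightarrow> ('v \<Rightarrow> bool)" where
  "ext_asg Y s \<sigma> = (\<lambda>v. if v \<in> Y then s v \<sigma> else \<sigma> v)"

definition dqbf_val :: "'v set \<Rightarrow> 'v set \<Rightarrow> 'v form \<Rightarrow> ('v \<Rightarrow> ('v \<Rightarrow> bool) \<Rightarrow> bool) \<Rightarrow> bool" where
  "dqbf_val X Y \<phi> s = (\<forall>\<sigma>\<in>Asg X. feval \<phi> (ext_asg Y s \<sigma>))"

definition act_asg :: "('v form \<Rightarrow> 'v form) \<Rightarrow> ('v \<Rightarrow> bool) \<Rightarrow> ('v \<Rightarrow> bool)" where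
  "act_asg g \<rho> = (\<lambda>v. feval (g (Var v)) \<rho>)"

definition act_asgX :: "'v set \<Rightarrow> ('v form \<Rightarrow> 'v form) \<Rightarrow> ('v \<Rightarrow> bool) \<Rightarrow> ('v \<Rightarrow> bool)" where
  "act_asgX X g \<sigma> = (\<lambda>v. if v \<in> X then feval (g (Var v)) \<sigma> else False)"

definition preserves_sat :: "('v form \<Rightarrow> 'v form) \<Rightarrow> bool" where
  "preserves_sat g = (\<forall>\<phi> \<rho>. feval (g \<phi>) \<rho> = feval \<phi> (act_asg g \<rho>))"

definition depends_on :: "('v \<Rightarrow> 'v set) \<Rightarrow> 'v form \<Rightarrow> 'v \<Rightarrow> bool" where
  "depends_on D \<psi> x = (\<exists>y\<in>fvars \<psi>. x \<in> D y)"

definition admissible :: "'v set \<Rightarrow> 'v set \<Rightarrow> ('v \<Rightarrow> 'v set) \<Rightarrow> ('v form \<Rightarrow> 'v form) \<Rightarrow> bool" where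
  "admissible X Y D g = (bij g \<and> preserves_sat g
     \<and> (\<forall>x\<in>X. g (Var x) \<in> BF X)
     \<and> (\<forall>y\<in>Y. g (Var y) \<in> BF Y)
     \<and> (\<forall>y\<in>Y. \<forall>x\<in>X. depends_on D (g (Var y)) x \<longrightarrow> Hilbert_Choice.inv g (Var x) \<in> BF (D y)))"

definition admissible_group :: "'v set \<Rightarrow> 'v set \<Rightarrow> ('v \<Rightarrow> 'v set) \<Rightarrow> ('v form \<Rightarrow> 'v form) set \<Rightarrow> bool" where
  "admissible_group X Y D Gs = (subgroup Gs (BijGroup (UNIV :: 'v form set))
                               \<and> (\<forall>g\<in>Gs. admissible X Y D g))"

definition syntactic_symmetry_group :: "'v set \<Rightarrow> 'v set \<Rightarrow> ('v \<Rightarrow> 'v set) \<Rightarrow> 'v form \<Rightarrow> ('v form \<Rightarrow> 'v form) set \<Rightarrow> bool" where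
  "syntactic_symmetry_group X Y D \<phi> Gs = (admissible_group X Y D Gs
     \<and> (\<forall>g\<in>Gs. \<forall>s\<in>Interp Y D. dqbf_val X Y \<phi> s = dqbf_val X Y (g \<phi>) s))"

(* associated group: bijections of S(P) (extensional, as in BijGroup) *)
definition associated_group :: "'v set \<Rightarrow> 'v set \<Rightarrow> ('v \<Rightarrow> 'v set) \<Rightarrow> ('v form \<Rightarrow> 'v form) set
    \<Rightarrow> (('v \<Rightarrow> ('v \<Rightarrow> bool) \<Rightarrow> bool) \<Rightarrow> ('v \<Rightarrow> ('v \<Rightarrow> bool) \<Rightarrow> bool)) set" where
  "associated_group X Y D Gs = {f \<in> Bij (Interp Y D).
     \<forall>s\<in>Interp Y D. \<forall>\<sigma>\<in>Asg X. \<exists>g\<in>Gs.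
        ext_asg Y (f s) (act_asgX X g \<sigma>) = act_asg g (ext_asg Y s \<sigma>)}"

definition semantic_symmetry_group :: "'v set \<Rightarrow> 'v set \<Rightarrow> ('v \<Rightarrow> 'v set) \<Rightarrow> 'v form
    \<Rightarrow> (('v \<Rightarrow> ('v \<Rightarrow> bool) \<Rightarrow> bool) \<Rightarrow> ('v \<Rightarrow> ('v \<Rightarrow> bool) \<Rightarrow> bool)) set \<Rightarrow> bool" where
  "semantic_symmetry_group X Y D \<phi> Gs = (subgroup Gs (BijGroup (Interp Y D))
     \<and> (\<forall>f\<in>Gs. \<forall>s\<in>Interp Y D. dqbf_val X Y \<phi> s = dqbf_val X Y \<phi> (f s)))"

end

theory Submission
  imports Defs "HOL-Algebra.Multiplicative_Group"
begin

lemma finite_subgroupI: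
  fixes G (structure)
  assumes gr: "group G" and fin: "finite (carrier G)" and sub: "H \<subseteq> carrier G"
    and one: "\<one> \<in> H" and mc: "\<And>x y. x \<in> H \<Longrightarrow> y \<in> H \<Longrightarrow> x \<otimes> y \<in> H"
  shows "subgroup H G"
proof -
  interpret group G by (rule gr)
  have pw: "x [^] (n::nat) \<in> H" if "x \<in> H" for x n
    using that by (induction n) (auto simp: one mc)
  show ?thesis
  proof
    show "H \<subseteq> carrier G" by (rule sub)
    show "\<one> \<in> H" by (rule one)
    show "x \<otimes> y \<in> H" if "x \<in> H" "y \<in> H" for x y using mc that by blast
    show "inv x \<in> H" if xH: "x \<in> H" for x
    proof -
      have xc: "x \<in> carrier G" using xH sub by blast
      have o: "ord x \<ge> 1" using ord_ge_1[OF fin xc] .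
      have "x [^] (ord x - 1) \<otimes> x = x [^] ord x"
        using o xc by (metis Suc_diff_1 less_le_trans nat_pow_Suc zero_less_one)
      also have "\<dots> = \<one>" using xc by simp
      finally have "inv x = x [^] (ord x - 1)"
        using xc inv_equality by auto
      then show ?thesis using pw xH by simp
    qed
  qed
qed

lemma fin_fun: assumes "finite (UNIV::'a set)" "finite (UNIV::'b set)" shows "finite (UNIV::('a\<Rightarrow>'b) set)"
proof -
  have "(UNIV::('a\<Rightarrow>'b) set) = PiE UNIV (\<lambda>_. UNIV)" by (auto simp: PiE_UNIV_domain)
  moreover have "finite (PiE (UNIV::'a set) (\<lambda>_. UNIV::'b set))"
    by (rule finite_PiE) (simp_all add: assms)
  ultimately show ?thesis by metis
qed
lemma feval_cong: "(\<And>v. v \<in> fvars \<phi> \<Longrightarrow> \<rho> v = \<rho>' v) \<Longrightarrow> feval \<phi> \<rho> = feval \<phi> \<rho>'"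
  by (induction \<phi>) auto

lemma act_comp:
  assumes p: "preserves_sat g2"
  shows "act_asg g1 (act_asg g2 \<rho>) = act_asg (g2 \<circ> g1) \<rho>"
proof
  fix v
  have h: "feval (g2 (g1 (Var v))) \<rho> = feval (g1 (Var v)) (act_asg g2 \<rho>)"
    using p by (simp add: preserves_sat_def)
  show "act_asg g1 (act_asg g2 \<rho>) v = act_asg (g2 \<circ> g1) \<rho> v"
    using h unfolding act_asg_def by simp
qed

lemma actX_comp:
  assumes "preserves_sat g2" "\<forall>x\<in>X. g1 (Var x) \<in> BF X"
  shows "act_asgX X g1 (act_asgX X g2 \<sigma>) = act_asgX X (g2 \<circ> g1) \<sigma>"
proof
  fix v
  show "act_asgX X g1 (act_asgX X g2 \<sigma>) v = act_asgX X (g2 \<circ> g1) \<sigma> v"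
  proof (cases "v \<in> X")
    case True
    have "feval (g1 (Var v)) (act_asgX X g2 \<sigma>) = feval (g1 (Var v)) (act_asg g2 \<sigma>)"
      apply (rule feval_cong)
      using assms(2) True by (auto simp: BF_def act_asgX_def act_asg_def)
    also have "\<dots> = feval (g2 (g1 (Var v))) \<sigma>" using assms(1) by (simp add: preserves_sat_def)
    finally show ?thesis using True by (simp add: act_asgX_def)
  qed (simp add: act_asgX_def)
qed

lemma actX_Asg: "act_asgX X g \<sigma> \<in> Asg X"
  by (simp add: act_asgX_def Asg_def)

theorem lemma5:
  fixes X Y :: "'v set" and D :: "'v \<Rightarrow> 'v set" and \<phi> :: "'v form"
    and Gsyn :: "('v form \<Rightarrow> 'v form) set"
  assumes "finite (UNIV :: 'v set)"
    and "X \<inter> Y = {}" and "X \<union> Y = UNIV"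
    and "\<forall>y\<in>Y. D y \<subseteq> X"
    and "syntactic_symmetry_group X Y D \<phi> Gsyn"
  shows "semantic_symmetry_group X Y D \<phi> (associated_group X Y D Gsyn)"
proof -
  define S where "S = Interp Y D"
  define A where "A = associated_group X Y D Gsyn"
  have sg: "subgroup Gsyn (BijGroup (UNIV :: 'v form set))"
    and adm: "\<And>g. g \<in> Gsyn \<Longrightarrow> admissible X Y D g"
    and sym: "\<And>g s. g \<in> Gsyn \<Longrightarrow> s \<in> S \<Longrightarrow> dqbf_val X Y \<phi> s = dqbf_val X Y (g \<phi>) s"
    using assms(5) by (auto simp: syntactic_symmetry_group_def admissible_group_def S_def)
  interpret Gs: subgroup Gsyn "BijGroup (UNIV :: 'v form set)" by (rule sg)
  have idG: "id \<in> Gsyn"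
    using Gs.one_closed by (simp add: BijGroup_def id_def restrict_def)
  have compG: "g1 \<circ> g2 \<in> Gsyn" if "g1 \<in> Gsyn" "g2 \<in> Gsyn" for g1 g2
  proof -
    have "g1 \<otimes>\<^bsub>BijGroup UNIV\<^esub> g2 \<in> Gsyn" using that by blast
    moreover have "g1 \<in> Bij UNIV" "g2 \<in> Bij UNIV" using that Gs.subset by (auto simp: BijGroup_def)
    ultimately show ?thesis by (simp add: BijGroup_def compose_def o_def restrict_def)
  qed
  have invG: "Hilbert_Choice.inv g \<in> Gsyn" if "g \<in> Gsyn" for g
  proof -
    have gB: "g \<in> Bij UNIV" using that Gs.subset by (auto simp: BijGroup_def)
    have "inv\<^bsub>BijGroup UNIV\<^esub> g \<in> Gsyn" using that by blast
    then show ?thesis using inv_BijGroup[OF gB] by (simp add: restrict_def)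
  qed
  have ps: "preserves_sat g" and bg: "bij g" and bx: "\<forall>x\<in>X. g (Var x) \<in> BF X"
    if "g \<in> Gsyn" for g using adm[OF that] by (auto simp: admissible_def)
  have finS: "finite S" by (rule finite_subset[of _ UNIV]) (auto intro!: fin_fun simp: assms(1))
  have grp: "group (BijGroup S)" by (rule group_BijGroup)
  have finB: "finite (Bij S)"
  proof (rule finite_subset)
    show "Bij S \<subseteq> S \<rightarrow>\<^sub>E S" by (auto simp: Bij_def bij_betw_def PiE_def)
    show "finite (S \<rightarrow>\<^sub>E S)" using finS by (simp add: finite_PiE)
  qed
  have Amem: "f \<in> A \<longleftrightarrow> f \<in> Bij S \<and> (\<forall>s\<in>S. \<forall>\<sigma>\<in>Asg X. \<exists>g\<in>Gsyn.
        ext_asg Y (f s) (act_asgX X g \<sigma>) = act_asg g (ext_asg Y s \<sigma>))" for f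
    by (simp add: A_def associated_group_def S_def)
  have Aprop: "\<exists>g\<in>Gsyn. ext_asg Y (f s) (act_asgX X g \<sigma>) = act_asg g (ext_asg Y s \<sigma>)"
    if "f \<in> A" "s \<in> S" "\<sigma> \<in> Asg X" for f s \<sigma>
    using that Amem by simp
  have AB: "f \<in> Bij S" if "f \<in> A" for f using that Amem by simp
  have fS: "f s \<in> S" if "f \<in> Bij S" "s \<in> S" for f s
    using that Bij_imp_funcset by blast
  have subA: "subgroup A (BijGroup S)"
  proof (rule finite_subgroupI[OF grp])
    show "finite (carrier (BijGroup S))" using finB by (simp add: BijGroup_def)
    show "A \<subseteq> carrier (BijGroup S)" using AB by (auto simp: BijGroup_def)
    show "\<one>\<^bsub>BijGroup S\<^esub> \<in> A"
    proof -
      have "(\<lambda>x\<in>S. x) \<in> A"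
      proof (subst Amem, intro conjI ballI)
        show "(\<lambda>x\<in>S. x) \<in> Bij S" by (rule id_Bij)
        fix s \<sigma> assume s: "s \<in> S" and \<sigma>: "\<sigma> \<in> Asg X"
        have a1: "act_asgX X id \<sigma> = \<sigma>" using \<sigma> by (auto simp: act_asgX_def Asg_def)
        have a2: "act_asg id \<rho> = \<rho>" for \<rho> by (simp add: act_asg_def)
        show "\<exists>g\<in>Gsyn. ext_asg Y ((\<lambda>x\<in>S. x) s) (act_asgX X g \<sigma>) = act_asg g (ext_asg Y s \<sigma>)"
          proof (rule bexI[of _ id])
          have "(\<lambda>x\<in>S. x) s = s" using s by simp
          then show "ext_asg Y ((\<lambda>x\<in>S. x) s) (act_asgX X id \<sigma>) = act_asg id (ext_asg Y s \<sigma>)"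
            using a1 a2 by metis
        qed (rule idG)
      qed
      then show ?thesis by (simp add: BijGroup_def)
    qed
    fix f1 f2 assume f1: "f1 \<in> A" and f2: "f2 \<in> A"
    have f1B: "f1 \<in> Bij S" and f2B: "f2 \<in> Bij S" using f1 f2 AB by auto
    have "compose S f1 f2 \<in> A"
    proof (subst Amem, intro conjI ballI)
      show "compose S f1 f2 \<in> Bij S" using compose_Bij f1B f2B by blast
      fix s \<sigma> assume s: "s \<in> S" and \<sigma>: "\<sigma> \<in> Asg X"
      obtain g2 where g2: "g2 \<in> Gsyn" and e2: "ext_asg Y (f2 s) (act_asgX X g2 \<sigma>) = act_asg g2 (ext_asg Y s \<sigma>)"
        using Aprop[OF f2 s \<sigma>] by blast
      obtain g1 where g1: "g1 \<in> Gsyn" and e1: "ext_asg Y (f1 (f2 s)) (act_asgX X g1 (act_asgX X g2 \<sigma>))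
          = act_asg g1 (ext_asg Y (f2 s) (act_asgX X g2 \<sigma>))"
        using Aprop[OF f1 fS[OF f2B s] actX_Asg] by blast
      have "ext_asg Y (compose S f1 f2 s) (act_asgX X (g2 \<circ> g1) \<sigma>) = act_asg (g2 \<circ> g1) (ext_asg Y s \<sigma>)"
        using e1 e2 s actX_comp[OF ps[OF g2] bx[OF g1]] act_comp[OF ps[OF g2]] by (simp add: compose_def)
      then show "\<exists>g\<in>Gsyn. ext_asg Y (compose S f1 f2 s) (act_asgX X g \<sigma>) = act_asg g (ext_asg Y s \<sigma>)"
        using compG[OF g2 g1] by blast
    qed
    then show "f1 \<otimes>\<^bsub>BijGroup S\<^esub> f2 \<in> A" using f1B f2B by (simp add: BijGroup_def)
  qed
  have dir: "dqbf_val X Y \<phi> s" if f: "f \<in> A" and s: "s \<in> S" and v: "dqbf_val X Y \<phi> (f s)" for f s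
  proof -
    have fB: "f \<in> Bij S" using f AB by auto
    show ?thesis unfolding dqbf_val_def
    proof
      fix \<sigma> assume \<sigma>: "\<sigma> \<in> Asg X"
      obtain g where g: "g \<in> Gsyn" and e: "ext_asg Y (f s) (act_asgX X g \<sigma>) = act_asg g (ext_asg Y s \<sigma>)"
        using Aprop[OF f s \<sigma>] by blast
      have "dqbf_val X Y (Hilbert_Choice.inv g \<phi>) (f s)" using v sym[OF invG[OF g] fS[OF fB s]] by simp
      then have "feval (Hilbert_Choice.inv g \<phi>) (ext_asg Y (f s) (act_asgX X g \<sigma>))"
        using actX_Asg[of X g \<sigma>] by (simp add: dqbf_val_def)
      then have "feval (Hilbert_Choice.inv g \<phi>) (act_asg g (ext_asg Y s \<sigma>))" using e by simp
      then have "feval (g (Hilbert_Choice.inv g \<phi>)) (ext_asg Y s \<sigma>)" using ps[OF g] by (simp add: preserves_sat_def)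
      then show "feval \<phi> (ext_asg Y s \<sigma>)" using bg[OF g] by (simp add: bij_is_surj surj_f_inv_f)
    qed
  qed
  show ?thesis unfolding semantic_symmetry_group_def A_def[symmetric] S_def[symmetric]
  proof (intro conjI ballI)
    show "subgroup A (BijGroup S)" by (rule subA)
    fix f s assume f: "f \<in> A" and s: "s \<in> S"
    have fB: "f \<in> Bij S" using f AB by auto
    interpret SA: subgroup A "BijGroup S" by (rule subA)
    have fi: "inv\<^bsub>BijGroup S\<^esub> f \<in> A" using f by blast
    have fi2: "inv\<^bsub>BijGroup S\<^esub> f = (\<lambda>x\<in>S. inv_into S f x)" using inv_BijGroup[OF fB] .
    have fs: "f s \<in> S" using fS[OF fB s] .
    have "inv_into S f (f s) = s" using fB s by (auto simp: Bij_def bij_betw_def)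
    then have ii: "(inv\<^bsub>BijGroup S\<^esub> f) (f s) = s" using fi2 fs by simp
    show "dqbf_val X Y \<phi> s = dqbf_val X Y \<phi> (f s)"
      using dir[OF f s] dir[OF fi fs] ii by auto
  qed
qed

end
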